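(* Let $(M,\circ,e)$ be a semi-simple holomorphic $F$-manifold with canonical coordinates $(u^1,\dots,u^n)$, so that $\partial_{u^i}\circ\partial_{u^j}=\delta_{ij}\partial_{u^j}$. Suppose the hermitian metric $\tilde h$ and the real structure $\tilde k$ on $T^{1,0}M$ are diagonal: $$\tilde h(\partial_{u^i},\partial_{u^j})=H_{ii}\delta_{ij},\qquad \tilde k(\partial_{u^i})=k_i\partial_{u^i},$$ with $H_{ii}>0$ and $|k_i|=1$, and with $\tilde k$ extended antilinearly. Then every eventual identity $\mathcal E$ of $(M,\circ,e)$ satisfies, for all sections $X,Y,Z$ of $T^{1,0}M$, $$\tilde D_X(\mathcal E\circ Y\circ Z)-\tilde D_Y(\mathcal E\circ X\circ Z)=\mathcal E\circ\big(\tilde D_X(Y\circ Z)-\tilde D_Y(X\circ Z)\big)$$ and $$[\tilde C_X,\tilde k\tilde C_Y\tilde k]=[\tilde C_{\mathcal E^{-1}\circ X},\tilde k\tilde C_{\mathcal E^{-1}\circ Y}\tilde k].$$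
   Context: A holomorphic $F$-manifold is a commutative, associative multiplication $\circ$ with unit $e$ on holomorphic vector fields of a complex manifold $M$ (extended to $T^{1,0}M$) satisfying $$L_{X\circ Y}(\circ)=X\circ L_Y(\circ)+Y\circ L_X(\circ),$$ where $$L_Z(\circ)(X,Y):=[Z,X\circ Y]-[Z,X]\circ Y-X\circ[Z,Y].$$ An eventual identity is a holomorphic vector field $\mathcal E$ with $\circ$-inverse $\mathcal E^{-1}$ such that $X\circ Y\circ\mathcal E^{-1}$ is again an $F$-manifold multiplication. $\tilde D$ is the Chern connection of $(T^{1,0}M,\tilde h)$, and $\tilde C_XY:=X\circ Y$. *)

theory Defs
  imports "HOL-Analysis.Analysis"
begin

text \<open>Local model: the coordinate domain U of canonical coordinates u = (u^1..u^n) is an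
open subset of complex^'n.  A (1,0) vector field / section X of T^{1,0}M is represented by its
component function x |-> (X^1(x),...,X^n(x)) w.r.t. the frame d/du^i.\<close>

type_synonym ('n) vf = "complex^('n::finite) \<Rightarrow> complex^'n"

type_synonym ('n) pmult = "complex^('n::finite) \<Rightarrow> complex^'n \<Rightarrow> complex^'n \<Rightarrow> complex^'n"

definition holo_field :: "(complex^'n::finite) set \<Rightarrow> 'n vf \<Rightarrow> bool" where
  "holo_field U X \<longleftrightarrow> (\<forall>x\<in>U. \<exists>D. (X has_derivative D) (at x) \<and>
                          (\<forall>(c::complex) v. D (c *s v) = c *s D v))"

definition lie :: "('n::finite) vf \<Rightarrow> 'n vf \<Rightarrow> 'n vf" where
  "lie X Y x = frechet_derivative Y (at x) (X x) - frechet_derivative X (at x) (Y x)"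

definition prodf :: "('n::finite) pmult \<Rightarrow> 'n vf \<Rightarrow> 'n vf \<Rightarrow> 'n vf" where
  "prodf m X Y = (\<lambda>x. m x (X x) (Y x))"

definition lieD :: "('n::finite) pmult \<Rightarrow> 'n vf \<Rightarrow> 'n vf \<Rightarrow> 'n vf \<Rightarrow> 'n vf" where
  "lieD m Z X Y = (\<lambda>x. lie Z (prodf m X Y) x - m x (lie Z X x) (Y x) - m x (X x) (lie Z Y x))"

definition F_mult :: "(complex^'n) set \<Rightarrow> 'n pmult \<Rightarrow> 'n vf \<Rightarrow> bool" where
  "F_mult U m e \<longleftrightarrow>
     (\<forall>x\<in>U. \<forall>(a::complex) b v v' w. m x (a *s v + b *s v') w = a *s m x v w + b *s m x v' w) \<and>
     (\<forall>x\<in>U. \<forall>v w. m x v w = m x w v) \<and>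
     (\<forall>x\<in>U. \<forall>u v w. m x (m x u v) w = m x u (m x v w)) \<and>
     holo_field U e \<and> (\<forall>x\<in>U. \<forall>v. m x (e x) v = v) \<and>
     (\<forall>X Y. holo_field U X \<longrightarrow> holo_field U Y \<longrightarrow> holo_field U (prodf m X Y)) \<and>
     (\<forall>X Y Z W. holo_field U X \<longrightarrow> holo_field U Y \<longrightarrow> holo_field U Z \<longrightarrow> holo_field U W \<longrightarrow>
        (\<forall>x\<in>U. lieD m (prodf m X Y) Z W x
                 = m x (X x) (lieD m Y Z W x) + m x (Y x) (lieD m X Z W x)))"

definition eventual_identity :: "(complex^'n) set \<Rightarrow> 'n pmult \<Rightarrow> 'n vf \<Rightarrow> 'n vf \<Rightarrow> 'n vf \<Rightarrow> bool" where
  "eventual_identity U m e E Einv \<longleftrightarrow>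
     holo_field U E \<and> (\<forall>x\<in>U. m x (E x) (Einv x) = e x) \<and>
     F_mult U (\<lambda>x v w. m x (m x v w) (Einv x)) E"

text \<open>Semisimple multiplication in canonical coordinates: d_i o d_j = delta_ij d_j, unit e = sum d_i.\<close>
definition cmult :: "('n::finite) pmult" where
  "cmult x v w = (\<chi> i. v $ i * w $ i)"

definition cunit :: "('n::finite) vf" where
  "cunit x = (\<chi> i. 1)"

definition wirt :: "'n::finite \<Rightarrow> (complex^'n \<Rightarrow> complex) \<Rightarrow> complex^'n \<Rightarrow> complex" where
  "wirt j f x = (frechet_derivative f (at x) (axis j 1)
                 - \<i> * frechet_derivative f (at x) (axis j \<i>)) / 2"

definition dirder :: "complex^'n::finite \<Rightarrow> 'n vf \<Rightarrow> (complex^'n \<Rightarrow> complex) \<Rightarrow> complex" where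
  "dirder x X f = (\<Sum>j\<in>UNIV. X x $ j * wirt j f x)"

text \<open>Chern connection of the hermitian metric with matrix H(x)_{ab} = h(d_a, d_b) in the
  holomorphic frame d_a: D s_a = sum_c theta_a^c s_c with theta_a^c = sum_b dH_{ab} (H^{-1})_{bc}.\<close>
definition chern :: "(complex^'n::finite \<Rightarrow> complex^'n^'n) \<Rightarrow> 'n vf \<Rightarrow> 'n vf \<Rightarrow> 'n vf" where
  "chern H X Y x = (\<chi> c. dirder x X (\<lambda>y. Y y $ c)
      + (\<Sum>a\<in>UNIV. \<Sum>b\<in>UNIV. Y x $ a * dirder x X (\<lambda>y. H y $ a $ b) * matrix_inv (H x) $ b $ c))"

definition diag_metric :: "(complex^'n::finite \<Rightarrow> 'n \<Rightarrow> real) \<Rightarrow> complex^'n \<Rightarrow> complex^'n^'n" where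
  "diag_metric Hd x = (\<chi> a b. if a = b then complex_of_real (Hd x a) else 0)"

definition ktil :: "(complex^'n::finite \<Rightarrow> 'n \<Rightarrow> complex) \<Rightarrow> complex^'n \<Rightarrow> complex^'n \<Rightarrow> complex^'n" where
  "ktil kd x v = (\<chi> i. kd x i * cnj (v $ i))"

definition Cop :: "('n::finite) pmult \<Rightarrow> 'n vf \<Rightarrow> complex^'n \<Rightarrow> complex^'n \<Rightarrow> complex^'n" where
  "Cop m X x v = m x (X x) v"

definition commut :: "('a::ab_group_add \<Rightarrow> 'a) \<Rightarrow> ('a \<Rightarrow> 'a) \<Rightarrow> 'a \<Rightarrow> 'a" where
  "commut A B = (\<lambda>v. A (B v) - B (A v))"

end

theory Submission
  imports Defs
begin
lemma diag_inv:
  fixes Hd :: "complex^'n::finite \<Rightarrow> 'n \<Rightarrow> real"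
  assumes "\<forall>i. Hd x i > 0"
  shows "matrix_inv (diag_metric Hd x) = (\<chi> a b. if a = b then inverse (complex_of_real (Hd x a)) else 0)"
proof -
  let ?A = "diag_metric Hd x"
  let ?B = "(\<chi> a b. if a = b then inverse (complex_of_real (Hd x a)) else 0) :: complex^'n^'n"
  have nz: "\<And>a. complex_of_real (Hd x a) \<noteq> 0" using assms by (metis less_irrefl of_real_eq_0_iff)
  have AB: "?A ** ?B = mat 1" "?B ** ?A = mat 1"
    by (auto simp: vec_eq_iff matrix_matrix_mult_def diag_metric_def mat_def nz right_inverse[OF nz] left_inverse[OF nz] if_distrib[of "\<lambda>z. z * _"] if_distrib[of "\<lambda>z. _ * z"] cong: if_cong)
  have "?A ** matrix_inv ?A = mat 1 \<and> matrix_inv ?A ** ?A = mat 1"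
    unfolding matrix_inv_def by (rule someI[of _ ?B]) (use AB in auto)
  then have "matrix_inv ?A = matrix_inv ?A ** (?A ** ?B)" using AB by (simp add: matrix_mul_rid)
  also have "\<dots> = ?B" using \<open>?A ** matrix_inv ?A = mat 1 \<and> _\<close> by (simp add: matrix_mul_assoc matrix_mul_lid)
  finally show ?thesis .
qed

lemma comp_deriv:
  "(f has_derivative D) (at x) \<Longrightarrow> ((\<lambda>y. f y $ i) has_derivative (\<lambda>v. D v $ i)) (at x)"
  by (rule bounded_linear.has_derivative[OF bounded_linear_vec_nth])

lemma wirt_mult:
  fixes f g :: "complex^'n::finite \<Rightarrow> complex"
  assumes "f differentiable at x" "g differentiable at x"
  shows "wirt j (\<lambda>y. f y * g y) x = f x * wirt j g x + wirt j f x * g x"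
proof -
  have "((\<lambda>y. f y * g y) has_derivative
     (\<lambda>v. f x * frechet_derivative g (at x) v + frechet_derivative f (at x) v * g x)) (at x)"
    using assms by (intro has_derivative_mult) (auto simp: frechet_derivative_works)
  from frechet_derivative_at[OF this, symmetric] show ?thesis
    by (simp add: wirt_def algebra_simps add_divide_distrib diff_divide_distrib)
qed

lemma dirder_mult:
  fixes f g :: "complex^'n::finite \<Rightarrow> complex"
  assumes "f differentiable at x" "g differentiable at x"
  shows "dirder x X (\<lambda>y. f y * g y) = f x * dirder x X g + dirder x X f * g x"
  unfolding dirder_def wirt_mult[OF assms]
  by (simp add: algebra_simps sum.distrib sum_distrib_left sum_distrib_right)

lemma dirder_zero: "dirder x X (\<lambda>y. 0) = 0"
  by (simp add: dirder_def wirt_def)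

lemma chern_diag:
  fixes Hd :: "complex^'n::finite \<Rightarrow> 'n \<Rightarrow> real"
  assumes "\<forall>i. Hd x i > 0"
  shows "chern (diag_metric Hd) X V x $ c = dirder x X (\<lambda>y. V y $ c)
     + V x $ c * dirder x X (\<lambda>y. diag_metric Hd y $ c $ c) * inverse (complex_of_real (Hd x c))"
proof -
  have z: "a \<noteq> c \<Longrightarrow> dirder x X (\<lambda>y. diag_metric Hd y $ a $ c) = 0" for a
    by (simp add: diag_metric_def dirder_zero)
  let ?d = "\<lambda>a b. dirder x X (\<lambda>y. diag_metric Hd y $ a $ b)"
  let ?i = "inverse (complex_of_real (Hd x c))"
  have "(\<Sum>a\<in>UNIV. \<Sum>b\<in>UNIV. V x $ a * ?d a b * (if b = c then inverse (complex_of_real (Hd x b)) else 0))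
      = (\<Sum>a\<in>UNIV. V x $ a * ?d a c * ?i)"
    by (rule sum.cong) (auto simp: if_distrib[of "\<lambda>z. _ * z"] sum.delta' cong: if_cong)
  also have "\<dots> = (\<Sum>a\<in>UNIV. if a = c then V x $ c * ?d c c * ?i else 0)"
    by (rule sum.cong) (auto simp: z)
  also have "\<dots> = V x $ c * ?d c c * ?i" by (simp add: sum.delta')
  finally have s: "(\<Sum>a\<in>UNIV. \<Sum>b\<in>UNIV. V x $ a * ?d a b * (if b = c then inverse (complex_of_real (Hd x b)) else 0))
      = V x $ c * ?d c c * ?i" .
  show ?thesis
    unfolding chern_def diag_inv[of Hd x, OF assms] using s by simp
qed

lemma axis_scale: "axis i (c::complex) = c *s axis i 1"
  by (simp add: vec_eq_iff axis_def)

lemma holo_const: "holo_field U (\<lambda>_. v)"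
  unfolding holo_field_def by (auto intro!: exI[of _ "\<lambda>_. 0"])

lemma holo_D:
  assumes "holo_field U X" "x \<in> U"
  obtains D where "(X has_derivative D) (at x)" "\<And>(c::complex) v. D (c *s v) = c *s D v"
  using assms unfolding holo_field_def by blast

lemma E_deriv:
  fixes E Einv :: "'n::finite vf"
  assumes U_open: "open U" and ev: "eventual_identity U cmult cunit E Einv"
    and xU: "x \<in> U" and ia: "i \<noteq> a"
  shows "wirt i (\<lambda>y. E y $ a) x = 0"
proof -
  define m' :: "'n pmult" where "m' = (\<lambda>x v w. cmult x (cmult x v w) (Einv x))"
  have hE: "holo_field U E" and inv: "\<forall>x\<in>U. cmult x (E x) (Einv x) = cunit x"
    and F: "F_mult U m' E" using ev unfolding eventual_identity_def m'_def by auto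
  have hp: "\<And>X Y. holo_field U X \<Longrightarrow> holo_field U Y \<Longrightarrow> holo_field U (prodf m' X Y)"
    and comp: "\<And>X Y Z W. holo_field U X \<Longrightarrow> holo_field U Y \<Longrightarrow> holo_field U Z \<Longrightarrow> holo_field U W \<Longrightarrow>
        (\<forall>x\<in>U. lieD m' (prodf m' X Y) Z W x
                 = m' x (X x) (lieD m' Y Z W x) + m' x (Y x) (lieD m' X Z W x))"
    using F unfolding F_mult_def by blast+
  define e :: "'n \<Rightarrow> 'n vf" where "e k = (\<lambda>_. axis k 1)" for k
  define P where "P k = prodf m' (e k) (e k)" for k
  have he: "holo_field U (e k)" for k unfolding e_def by (rule holo_const)
  have hP: "holo_field U (P k)" for k unfolding P_def using he hp by blast
  have Pc: "P k y $ l = (if l = k then Einv y $ k else 0)" for k y l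
    by (simp add: P_def prodf_def m'_def e_def cmult_def axis_def)
  have Einz: "Einv y $ k \<noteq> 0" if "y \<in> U" for y k
  proof -
    have "cmult y (E y) (Einv y) $ k = 1" using inv that by (simp add: cunit_def)
    then show ?thesis by (auto simp: cmult_def)
  qed
  have fde: "frechet_derivative (e k) (at y) = (\<lambda>_. 0)" for k y by (simp add: e_def)
  obtain DPi where DPi: "(P i has_derivative DPi) (at x)" "\<And>(c::complex) v. DPi (c *s v) = c *s DPi v"
    using holo_D[OF hP xU] by blast
  obtain DPa where DPa: "(P a has_derivative DPa) (at x)" "\<And>(c::complex) v. DPa (c *s v) = c *s DPa v"
    using holo_D[OF hP xU] by blast
  have fPi: "frechet_derivative (P i) (at x) = DPi" using frechet_derivative_at[OF DPi(1)] by simp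
  have fPa: "frechet_derivative (P a) (at x) = DPa" using frechet_derivative_at[OF DPa(1)] by simp
  have DPi0: "DPi v $ a = 0" for v
  proof -
    have "(\<lambda>v. DPi v $ a) = frechet_derivative (\<lambda>y. P i y $ a) (at x)"
      by (rule frechet_derivative_at[OF comp_deriv[OF DPi(1)]])
    also have "(\<lambda>y. P i y $ a) = (\<lambda>y. 0)" using ia by (simp add: Pc)
    finally show ?thesis by (metis frechet_derivative_const)
  qed
  note c1 = comp[of "e i" "e i" "e a" "e a", OF he he he he, rule_format, OF xU]
  have r0: "(m' x (e i x) w) $ a = 0" for w using ia by (simp add: m'_def e_def cmult_def axis_def)
  have L0: "lieD m' (P i) (e a) (e a) x $ a = 0" using c1 r0 by (simp add: P_def)
  have Pix: "P i x = Einv x $ i *s axis i 1" by (simp add: vec_eq_iff Pc axis_def)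
  have lie1: "lie (P i) (e a) x $ a = 0" by (simp add: lie_def fde fPi DPi0)
  have l2: "lie (P i) (P a) x $ a = Einv x $ i * DPa (axis i 1) $ a"
    by (simp add: lie_def fPi fPa DPi0 Pix DPa(2))
  have m1: "m' x (lie (P i) (e a) x) (e a x) $ a = 0" "m' x (e a x) (lie (P i) (e a) x) $ a = 0"
    by (simp_all add: m'_def cmult_def lie1)
  have Pa: "prodf m' (e a) (e a) = P a" by (simp add: P_def)
  have "lieD m' (P i) (e a) (e a) x $ a = Einv x $ i * DPa (axis i 1) $ a"
    unfolding lieD_def Pa using l2 m1 by simp
  with L0 Einz[OF xU] have DPa0: "DPa (axis i 1) $ a = 0" by simp
  obtain DE where DE: "(E has_derivative DE) (at x)" "\<And>(c::complex) v. DE (c *s v) = c *s DE v"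
    using holo_D[OF hE xU] by blast
  let ?g = "\<lambda>y. E y $ a" and ?q = "\<lambda>y. P a y $ a"
  have dg: "(?g has_derivative (\<lambda>v. DE v $ a)) (at x)" by (rule comp_deriv[OF DE(1)])
  have dq: "(?q has_derivative (\<lambda>v. DPa v $ a)) (at x)" by (rule comp_deriv[OF DPa(1)])
  have d1: "((\<lambda>y. ?g y * ?q y) has_derivative (\<lambda>v. ?g x * DPa v $ a + DE v $ a * ?q x)) (at x)"
    by (rule has_derivative_mult[OF dg dq])
  have gq: "\<forall>y\<in>U. (1::complex) = ?g y * ?q y"
  proof
    fix y assume "y \<in> U"
    then have "cmult y (E y) (Einv y) $ a = 1" using inv by (simp add: cunit_def)
    then show "(1::complex) = ?g y * ?q y" by (simp add: cmult_def Pc)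
  qed
  have d2: "((\<lambda>y. ?g y * ?q y) has_derivative (\<lambda>v. 0)) (at x)"
    by (rule has_derivative_transform_within_open[OF has_derivative_const U_open xU]) (use gq in auto)
  have "(\<lambda>v. ?g x * DPa v $ a + DE v $ a * ?q x) = (\<lambda>v. 0)"
    by (rule has_derivative_unique[OF d1 d2])
  from fun_cong[OF this, of "axis i 1"] DPa0 Einz[OF xU] have DE0: "DE (axis i 1) $ a = 0"
    by (simp add: Pc)
  have fg: "frechet_derivative ?g (at x) = (\<lambda>v. DE v $ a)" using frechet_derivative_at[OF dg] by simp
  have "axis i \<i> = \<i> *s axis i (1::complex)" by (rule axis_scale)
  then show ?thesis by (simp add: wirt_def fg DE(2) DE0)
qed

lemma comp_diff: "f differentiable at x \<Longrightarrow> (\<lambda>y. f y $ i) differentiable at x"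
  unfolding differentiable_def using comp_deriv by blast

lemma dirder_E:
  fixes E Einv :: "'n::finite vf"
  assumes U_open: "open U" and ev: "eventual_identity U cmult cunit E Einv" and xU: "x \<in> U"
  shows "dirder x X (\<lambda>y. E y $ c) = X x $ c * wirt c (\<lambda>y. E y $ c) x"
proof -
  have "dirder x X (\<lambda>y. E y $ c) = (\<Sum>j\<in>UNIV. if j = c then X x $ c * wirt c (\<lambda>y. E y $ c) x else 0)"
    unfolding dirder_def by (rule sum.cong) (auto simp: E_deriv[OF U_open ev xU])
  then show ?thesis by (simp add: sum.delta')
qed

lemma part2:
  "commut (Cop cmult X x) (ktil kd x \<circ> Cop cmult Y x \<circ> ktil kd x)
      = commut (Cop cmult X' x) (ktil kd x \<circ> Cop cmult Y' x \<circ> ktil kd x)"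
  by (simp add: fun_eq_iff vec_eq_iff commut_def Cop_def cmult_def ktil_def)

theorem mainTheorem18:
  fixes U :: "(complex^'n) set"
    and Hd :: "complex^'n \<Rightarrow> 'n \<Rightarrow> real"
    and kd :: "complex^'n \<Rightarrow> 'n \<Rightarrow> complex"
    and E Einv :: "'n vf"
  assumes U_open: "open U"
    and Fman: "F_mult U cmult cunit"
    and H_pos: "\<forall>x\<in>U. \<forall>i. Hd x i > 0"
    and H_diff: "\<forall>i. (\<lambda>y. Hd y i) differentiable_on U"
    and k_norm: "\<forall>x\<in>U. \<forall>i. cmod (kd x i) = 1"
    and ev: "eventual_identity U cmult cunit E Einv"
  shows
    "(\<forall>X Y Z :: 'n vf. X differentiable_on U \<longrightarrow> Y differentiable_on U \<longrightarrow> Z differentiable_on U \<longrightarrow>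
       (\<forall>x\<in>U.
          chern (diag_metric Hd) X (prodf cmult (prodf cmult E Y) Z) x
          - chern (diag_metric Hd) Y (prodf cmult (prodf cmult E X) Z) x
        = cmult x (E x) (chern (diag_metric Hd) X (prodf cmult Y Z) x
                          - chern (diag_metric Hd) Y (prodf cmult X Z) x)))
   \<and> (\<forall>X Y :: 'n vf. \<forall>x\<in>U.
        commut (Cop cmult X x) (ktil kd x \<circ> Cop cmult Y x \<circ> ktil kd x)
      = commut (Cop cmult (prodf cmult Einv X) x) (ktil kd x \<circ> Cop cmult (prodf cmult Einv Y) x \<circ> ktil kd x))"
proof (intro conjI allI impI ballI)
  fix X Y :: "'n vf" and x assume "x \<in> U"
  show "commut (Cop cmult X x) (ktil kd x \<circ> Cop cmult Y x \<circ> ktil kd x)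
      = commut (Cop cmult (prodf cmult Einv X) x) (ktil kd x \<circ> Cop cmult (prodf cmult Einv Y) x \<circ> ktil kd x)"
    by (rule part2)
next
  fix X Y Z :: "'n vf" and x
  assume dX: "X differentiable_on U" and dY: "Y differentiable_on U" and dZ: "Z differentiable_on U"
    and xU: "x \<in> U"
  have hE: "holo_field U E" using ev by (simp add: eventual_identity_def)
  have Hx: "\<forall>i. Hd x i > 0" using H_pos xU by blast
  have dat: "F differentiable at x" if "F differentiable_on U" for F :: "'n vf"
    using that U_open xU differentiable_on_eq_differentiable_at by blast
  have dE: "E differentiable at x"
    using holo_D[OF hE xU] unfolding differentiable_def by metis
  let ?w = "\<lambda>c. wirt c (\<lambda>y. E y $ c) x"
  let ?h = "\<lambda>c W. dirder x W (\<lambda>y. diag_metric Hd y $ c $ c) * inverse (complex_of_real (Hd x c))"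
  show "chern (diag_metric Hd) X (prodf cmult (prodf cmult E Y) Z) x -
        chern (diag_metric Hd) Y (prodf cmult (prodf cmult E X) Z) x =
        cmult x (E x) (chern (diag_metric Hd) X (prodf cmult Y Z) x - chern (diag_metric Hd) Y (prodf cmult X Z) x)"
  proof (subst vec_eq_iff, rule allI)
    fix c
    have de: "(\<lambda>y. E y $ c) differentiable at x" by (rule comp_diff[OF dE])
    have dp: "(\<lambda>y. A y $ c * B y $ c) differentiable at x"
      if "A differentiable_on U" "B differentiable_on U" for A B :: "'n vf"
      using comp_diff[OF dat[OF that(1)]] comp_diff[OF dat[OF that(2)]] by (rule differentiable_mult)
    have r1: "(\<lambda>y. prodf cmult (prodf cmult E A) B y $ c) = (\<lambda>y. E y $ c * (A y $ c * B y $ c))" for A B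
      by (simp add: prodf_def cmult_def mult.assoc)
    have r2: "(\<lambda>y. prodf cmult A B y $ c) = (\<lambda>y. A y $ c * B y $ c)" for A B
      by (simp add: prodf_def cmult_def)
    have e1: "dirder x X (\<lambda>y. prodf cmult (prodf cmult E Y) Z y $ c)
       = E x $ c * dirder x X (\<lambda>y. Y y $ c * Z y $ c) + X x $ c * ?w c * (Y x $ c * Z x $ c)"
      unfolding r1 dirder_mult[OF de dp[OF dY dZ]] dirder_E[OF U_open ev xU] ..
    have e2: "dirder x Y (\<lambda>y. prodf cmult (prodf cmult E X) Z y $ c)
       = E x $ c * dirder x Y (\<lambda>y. X y $ c * Z y $ c) + Y x $ c * ?w c * (X x $ c * Z x $ c)"
      unfolding r1 dirder_mult[OF de dp[OF dX dZ]] dirder_E[OF U_open ev xU] ..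
    show "(chern (diag_metric Hd) X (prodf cmult (prodf cmult E Y) Z) x -
        chern (diag_metric Hd) Y (prodf cmult (prodf cmult E X) Z) x) $ c =
        cmult x (E x) (chern (diag_metric Hd) X (prodf cmult Y Z) x - chern (diag_metric Hd) Y (prodf cmult X Z) x) $ c"
      apply (simp only: cmult_def[of x] vec_lambda_beta vector_minus_component chern_diag[of Hd x, OF Hx])
      apply (simp only: e1 e2)
      apply (simp add: algebra_simps prodf_def cmult_def)
      done
  qed
qed

end
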